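(* Let $I \subseteq K[\mathbf{X}]=K[X_1,\dots,X_n]$ be an ideal and let $<_1$ and $<_2$ be two term orders (each of the form $<_{\mathbf{r},m}$ described in the context). Let $G\subseteq I$ be a set which is a Gröbner basis of $I$ both with respect to $<_1$ and with respect to $<_2$. If $<_1$ and $<_2$ are equivalent with respect to $G$, then they are equivalent with respect to $I$.
   Context: $K$ is a field complete for a discrete valuation $\mathrm{val}$ (e.g. $\mathbb{Q}_p$ or $\mathbb{Q}((T))$). A term is $c\mathbf{X}^{\alpha}$ with $c\in K^\times$, $\alpha\in\mathbb{N}^n$. For $\mathbf{r}\in\mathbb{Q}^n$, the Tate algebra $K\{\mathbf{X};\mathbf{r}\}$ is the set of series $\sum_{\alpha} a_\alpha \mathbf{X}^\alpha$ with $\mathrm{val}(a_\alpha)-\mathbf{r}\cdot\alpha\to+\infty$ as $|\alpha|\to\infty$; the Gauss valuation of a term is $\mathrm{val}_{\mathbf{r}}(a\mathbf{X}^\alpha)=\mathrm{val}(a)-\mathbf{r}\cdot\alpha$ and of a series is the minimum over its terms. Given a monomial order $\le_m$, the term order $<_{\mathbf{r},m}$ is: $a\mathbf{X}^\alpha<_{\mathbf{r},m} b\mathbf{X}^\beta$ iff $\mathrm{val}_{\mathbf{r}}(a\mathbf{X}^\alpha)>\mathrm{val}_{\mathbf{r}}(b\mathbf{X}^\beta)$, or these are equal and $\mathbf{X}^\alpha<_m\mathbf{X}^\beta$. The leading term $\mathrm{LT}_<(f)$ of a nonzero series is its maximal term. For an ideal $I\subseteq K[\mathbf{X}]$, $I_{\mathbf{r}}$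 is the ideal of $K\{\mathbf{X};\mathbf{r}\}$ generated by $I$; a set $G\subseteq I$ is a Gröbner basis of $I$ with respect to $<_{\mathbf{r},m}$ if for every nonzero $f\in I_{\mathbf{r}}$ there is $g\in G$ with $\mathrm{LT}_{\mathbf{r},m}(g)$ dividing $\mathrm{LT}_{\mathbf{r},m}(f)$ (divisibility of terms = divisibility of their monomials). For a term order $<$, $\mathrm{LT}_<(I)$ denotes the ideal of $K[\mathbf{X}]$ generated by $\{\mathrm{LT}_<(f): f\in I\setminus\{0\}\}$, and for a finite set $F$ of polynomials $\mathrm{LT}_<(F)=\{\mathrm{LT}_<(f): f\in F\}$. Two term orders are equivalent with respect to a set $F$ of polynomials if $\mathrm{LT}_{<_1}(F)=\mathrm{LT}_{<_2}(F)$, and equivalent with respect to an ideal $I$ if $\mathrm{LT}_{<_1}(I)=\mathrm{LT}_{<_2}(I)$. *)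

theory Defs
  imports Complex_Main "HOL-Library.Function_Algebras"
begin

text \<open>Exponent vectors are functions 'v \<Rightarrow> nat on a finite type 'v of variables
  (so n = CARD('v)).  Series/polynomials over K are coefficient functions
  from exponent vectors to K.\<close>

type_synonym ('v, 'k) series = "('v \<Rightarrow> nat) \<Rightarrow> 'k"

definition discrete_valuation :: "('k::field \<Rightarrow> int) \<Rightarrow> bool" where
  "discrete_valuation val \<longleftrightarrow>
     (\<forall>x y. x \<noteq> 0 \<longrightarrow> y \<noteq> 0 \<longrightarrow> val (x * y) = val x + val y) \<and>
     (\<forall>x y. x \<noteq> 0 \<longrightarrow> y \<noteq> 0 \<longrightarrow> x + y \<noteq> 0 \<longrightarrow> val (x + y) \<ge> min (val x) (val y)) \<and>
     (\<forall>k. \<exists>x. x \<noteq> 0 \<and> val x = k)"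

text \<open>Completeness with respect to the valuation (val(0) = +infinity).\<close>
definition complete_valuation :: "('k::field \<Rightarrow> int) \<Rightarrow> bool" where
  "complete_valuation val \<longleftrightarrow>
     (\<forall>x :: nat \<Rightarrow> 'k.
        (\<forall>N. \<exists>M. \<forall>i j. M \<le> i \<longrightarrow> M \<le> j \<longrightarrow> x i = x j \<or> N \<le> val (x i - x j))
        \<longrightarrow> (\<exists>L. \<forall>N. \<exists>M. \<forall>i. M \<le> i \<longrightarrow> x i = L \<or> N \<le> val (x i - L)))"

definition complete_dvf :: "('k::field \<Rightarrow> int) \<Rightarrow> bool" where
  "complete_dvf val \<longleftrightarrow> discrete_valuation val \<and> complete_valuation val"

definition monomial_order :: "(('v \<Rightarrow> nat) \<Rightarrow> ('v \<Rightarrow> nat) \<Rightarrow> bool) \<Rightarrow> bool" where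
  "monomial_order m \<longleftrightarrow>
     (\<forall>a. m a a) \<and> (\<forall>a b. m a b \<longrightarrow> m b a \<longrightarrow> a = b) \<and>
     (\<forall>a b c. m a b \<longrightarrow> m b c \<longrightarrow> m a c) \<and> (\<forall>a b. m a b \<or> m b a) \<and>
     wf {(a, b). m a b \<and> a \<noteq> b} \<and>
     (\<forall>a. m 0 a) \<and> (\<forall>a b c. m a b \<longrightarrow> m (a + c) (b + c))"

definition valr :: "('k::field \<Rightarrow> int) \<Rightarrow> ('v::finite \<Rightarrow> rat) \<Rightarrow> 'k \<Rightarrow> ('v \<Rightarrow> nat) \<Rightarrow> rat" where
  "valr val r c a = of_int (val c) - (\<Sum>v\<in>UNIV. r v * of_nat (a v))"

definition term_less ::
  "('k::field \<Rightarrow> int) \<Rightarrow> ('v::finite \<Rightarrow> rat) \<Rightarrow> (('v \<Rightarrow> nat) \<Rightarrow> ('v \<Rightarrow> nat) \<Rightarrow> bool)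
     \<Rightarrow> 'k \<times> ('v \<Rightarrow> nat) \<Rightarrow> 'k \<times> ('v \<Rightarrow> nat) \<Rightarrow> bool" where
  "term_less val r m t1 t2 \<longleftrightarrow>
     valr val r (fst t1) (snd t1) > valr val r (fst t2) (snd t2) \<or>
     (valr val r (fst t1) (snd t1) = valr val r (fst t2) (snd t2) \<and>
      m (snd t1) (snd t2) \<and> snd t1 \<noteq> snd t2)"

definition lt_exp ::
  "('k::field \<Rightarrow> int) \<Rightarrow> ('v::finite \<Rightarrow> rat) \<Rightarrow> (('v \<Rightarrow> nat) \<Rightarrow> ('v \<Rightarrow> nat) \<Rightarrow> bool)
     \<Rightarrow> ('v, 'k) series \<Rightarrow> ('v \<Rightarrow> nat)" where
  "lt_exp val r m f = (THE a. f a \<noteq> 0 \<and>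
      (\<forall>b. f b \<noteq> 0 \<longrightarrow> b \<noteq> a \<longrightarrow> term_less val r m (f b, b) (f a, a)))"

definition LT ::
  "('k::field \<Rightarrow> int) \<Rightarrow> ('v::finite \<Rightarrow> rat) \<Rightarrow> (('v \<Rightarrow> nat) \<Rightarrow> ('v \<Rightarrow> nat) \<Rightarrow> bool)
     \<Rightarrow> ('v, 'k) series \<Rightarrow> 'k \<times> ('v \<Rightarrow> nat)" where
  "LT val r m f = (f (lt_exp val r m f), lt_exp val r m f)"

definition polys :: "('v, 'k::zero) series set" where
  "polys = {f. finite {a. f a \<noteq> 0}}"

definition smult_series :: "('v::finite, 'k::field) series \<Rightarrow> ('v, 'k) series \<Rightarrow> ('v, 'k) series" where
  "smult_series f g = (\<lambda>c. \<Sum>a\<in>{a. a \<le> c}. f a * g (c - a))"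

text \<open>Tate algebra K{X; r}: val_r of the terms tends to +infinity.\<close>
definition tate :: "('k::field \<Rightarrow> int) \<Rightarrow> ('v::finite \<Rightarrow> rat) \<Rightarrow> ('v, 'k) series set" where
  "tate val r = {f. \<forall>N::rat. finite {a. f a \<noteq> 0 \<and> valr val r (f a) a \<le> N}}"

definition tate_ideal :: "('k::field \<Rightarrow> int) \<Rightarrow> ('v::finite \<Rightarrow> rat) \<Rightarrow> ('v, 'k) series set \<Rightarrow> ('v, 'k) series set" where
  "tate_ideal val r I = {f. \<exists>(k::nat) h g. (\<forall>i<k. h i \<in> tate val r \<and> g i \<in> I) \<and>
       f = (\<Sum>i<k. smult_series (h i) (g i))}"

definition poly_ideal :: "('v::finite, 'k::field) series set \<Rightarrow> bool" where
  "poly_ideal J \<longleftrightarrow> J \<subseteq> polys \<and> 0 \<in> J \<and> (\<forall>f\<in>J. \<forall>g\<in>J. f + g \<in> J) \<and>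
     (\<forall>h\<in>polys. \<forall>f\<in>J. smult_series h f \<in> J)"

definition poly_ideal_gen :: "('v::finite, 'k::field) series set \<Rightarrow> ('v, 'k) series set" where
  "poly_ideal_gen S = \<Inter> {J. poly_ideal J \<and> S \<subseteq> J}"

definition monom :: "'k::zero \<Rightarrow> ('v \<Rightarrow> nat) \<Rightarrow> ('v, 'k) series" where
  "monom c a = (\<lambda>b. if b = a then c else 0)"

definition LT_ideal ::
  "('k::field \<Rightarrow> int) \<Rightarrow> ('v::finite \<Rightarrow> rat) \<Rightarrow> (('v \<Rightarrow> nat) \<Rightarrow> ('v \<Rightarrow> nat) \<Rightarrow> bool)
     \<Rightarrow> ('v, 'k) series set \<Rightarrow> ('v, 'k) series set" where
  "LT_ideal val r m I = poly_ideal_gen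
     ((\<lambda>f. monom (fst (LT val r m f)) (snd (LT val r m f))) ` (I - {0}))"

definition LT_set ::
  "('k::field \<Rightarrow> int) \<Rightarrow> ('v::finite \<Rightarrow> rat) \<Rightarrow> (('v \<Rightarrow> nat) \<Rightarrow> ('v \<Rightarrow> nat) \<Rightarrow> bool)
     \<Rightarrow> ('v, 'k) series set \<Rightarrow> ('k \<times> ('v \<Rightarrow> nat)) set" where
  "LT_set val r m F = LT val r m ` (F - {0})"

text \<open>G \<subseteq> I is a Groebner basis of I w.r.t. <_{r,m}; term divisibility = divisibility
  of monomials = componentwise \<le> of exponents.\<close>
definition groebner_basis ::
  "('k::field \<Rightarrow> int) \<Rightarrow> ('v::finite \<Rightarrow> rat) \<Rightarrow> (('v \<Rightarrow> nat) \<Rightarrow> ('v \<Rightarrow> nat) \<Rightarrow> bool)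
     \<Rightarrow> ('v, 'k) series set \<Rightarrow> ('v, 'k) series set \<Rightarrow> bool" where
  "groebner_basis val r m I G \<longleftrightarrow> G \<subseteq> I \<and>
     (\<forall>f\<in>tate_ideal val r I. f \<noteq> 0 \<longrightarrow>
        (\<exists>g\<in>G. g \<noteq> 0 \<and> snd (LT val r m g) \<le> snd (LT val r m f)))"

end

theory Submission
  imports Defs "HOL-Library.FuncSet"
begin

lemma fin_le: "finite {a::'v::finite \<Rightarrow> nat. a \<le> c}"
proof (rule finite_subset[of _ "PiE UNIV (\<lambda>v. {..c v})"])
  show "{a. a \<le> c} \<subseteq> PiE UNIV (\<lambda>v. {..c v})"
    by (auto simp: le_fun_def PiE_def extensional_def)
  show "finite (PiE UNIV (\<lambda>v. {..c v}))" by (rule finite_PiE) auto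
qed

lemma smult_monom:
  "smult_series (monom c d) (monom c' e :: ('v::finite, 'k::field) series) = monom (c*c') (d+e)"
proof (rule ext)
  fix x :: "'v \<Rightarrow> nat"
  have "smult_series (monom c d) (monom c' e) x
      = (\<Sum>a\<in>{a. a \<le> x}. if a = d then c * monom c' e (x - a) else 0)"
    unfolding smult_series_def by (rule sum.cong) (auto simp: monom_def)
  also have "\<dots> = (if d \<le> x then c * monom c' e (x - d) else 0)"
    using fin_le[of x] by (simp add: sum.delta)
  also have "\<dots> = monom (c*c') (d+e) x"
  proof (cases "d \<le> x")
    case True
    have "(x - d = e) = (x = d + e)"
    proof
      assume h: "x - d = e"
      show "x = d + e"
      proof (rule ext)
        fix v
        have "d v \<le> x v" using True by (simp add: le_fun_def)
        moreover have "x v - d v = e v" using fun_cong[OF h, of v] by simp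
        ultimately show "x v = (d + e) v" by simp
      qed
    next
      assume "x = d + e" then show "x - d = e" by (simp add: fun_eq_iff)
    qed
    then show ?thesis using True by (simp add: monom_def)
  next
    case False
    have "x \<noteq> d + e" using False by (auto simp: le_fun_def)
    then show ?thesis using False by (simp add: monom_def)
  qed
  finally show "smult_series (monom c d) (monom c' e) x = monom (c*c') (d+e) x" .
qed

lemma smult_one: "smult_series (monom 1 0) (f :: ('v::finite, 'k::field) series) = f"
proof (rule ext)
  fix x :: "'v \<Rightarrow> nat"
  have "smult_series (monom 1 0) f x
      = (\<Sum>a\<in>{a. a \<le> x}. if a = 0 then f (x - a) else 0)"
    unfolding smult_series_def by (rule sum.cong) (auto simp: monom_def)
  also have "\<dots> = f x"
    using fin_le[of x] by (simp add: sum.delta le_fun_def)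
  finally show "smult_series (monom 1 0) f x = f x" .
qed

lemma monom_polys: "monom c a \<in> polys"
proof -
  have "{b. monom c a b \<noteq> 0} \<subseteq> {a}" by (auto simp: monom_def)
  then show ?thesis unfolding polys_def by (auto intro: finite_subset)
qed

lemma monom_tate: "monom 1 0 \<in> tate val r"
proof -
  have "\<And>N. {a. monom 1 0 a \<noteq> 0 \<and> valr val r (monom 1 0 a) a \<le> N} \<subseteq> {0}"
    by (auto simp: monom_def)
  then show ?thesis unfolding tate_def by (auto intro: finite_subset)
qed

lemma in_tate_ideal:
  assumes "(f :: ('v::finite, 'k::field) series) \<in> I"
  shows "f \<in> tate_ideal val r I"
  unfolding tate_ideal_def
  apply (rule CollectI)
  apply (rule exI[of _ 1], rule exI[of _ "\<lambda>_. monom 1 0"], rule exI[of _ "\<lambda>_. f"])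
  using assms monom_tate smult_one by (auto intro!: sym[OF smult_one])

lemma finite_max:
  assumes "finite S" "S \<noteq> {}"
    and tot: "\<forall>a\<in>S. \<forall>b\<in>S. a \<noteq> b \<longrightarrow> R a b \<or> R b a"
    and tr: "\<forall>a\<in>S. \<forall>b\<in>S. \<forall>c\<in>S. R a b \<longrightarrow> R b c \<longrightarrow> R a c"
  shows "\<exists>a\<in>S. \<forall>b\<in>S. b \<noteq> a \<longrightarrow> R b a"
  using assms(3,4)
proof (induction rule: finite_ne_induct[OF assms(1,2)])
  case (1 x) show ?case by blast
next
  case (2 x F)
  have totF: "\<forall>a\<in>F. \<forall>b\<in>F. a \<noteq> b \<longrightarrow> R a b \<or> R b a"
    using "2.prems"(1) by blast
  have trF: "\<forall>a\<in>F. \<forall>b\<in>F. \<forall>c\<in>F. R a b \<longrightarrow> R b c \<longrightarrow> R a c"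
    using "2.prems"(2) by blast
  obtain a where a: "a \<in> F" "\<forall>b\<in>F. b \<noteq> a \<longrightarrow> R b a" using "2.IH"[OF totF trF] by blast
  show ?case
  proof (cases "R a x")
    case True
    have "\<forall>b\<in>insert x F. b \<noteq> x \<longrightarrow> R b x"
    proof (intro ballI impI)
      fix b assume b: "b \<in> insert x F" "b \<noteq> x"
      then have bF: "b \<in> F" by simp
      show "R b x"
      proof (cases "b = a")
        case True then show ?thesis using \<open>R a x\<close> by simp
      next
        case False
        then have "R b a" using a bF by simp
        then show ?thesis using "2.prems"(2) \<open>R a x\<close> bF a(1) by blast
      qed
    qed
    then show ?thesis by blast
  next
    case False
    have "x \<noteq> a" using a(1) "2.hyps" by blast
    then have "R x a \<or> R a x" using "2.prems"(1) a(1) by blast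
    then have "R x a" using False by blast
    then show ?thesis using a by auto
  qed
qed

lemma lt_coeff_nz:
  assumes mo: "monomial_order m" and fp: "f \<in> polys" and nz: "f \<noteq> 0"
  shows "f (lt_exp val r m f) \<noteq> 0"
proof -
  define S where "S = {a. f a \<noteq> 0}"
  define R where "R = (\<lambda>a b. term_less val r m (f a, a) (f b, b))"
  have fin: "finite S" using fp unfolding polys_def S_def by auto
  have ne: "S \<noteq> {}" using nz unfolding S_def by auto
  have antis: "\<And>a b. m a b \<Longrightarrow> m b a \<Longrightarrow> a = b" and trm: "\<And>a b c. m a b \<Longrightarrow> m b c \<Longrightarrow> m a c"
    and totm: "\<And>a b. m a b \<or> m b a"
    using mo unfolding monomial_order_def by blast+
  have tot: "\<forall>a\<in>S. \<forall>b\<in>S. a \<noteq> b \<longrightarrow> R a b \<or> R b a"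
    unfolding R_def term_less_def using totm by auto
  have tr: "\<forall>a\<in>S. \<forall>b\<in>S. \<forall>c\<in>S. R a b \<longrightarrow> R b c \<longrightarrow> R a c"
  proof (intro ballI impI)
    fix a b c assume ab: "R a b" and bc: "R b c"
    define va where "va = valr val r (f a) a"
    define vb where "vb = valr val r (f b) b"
    define vc where "vc = valr val r (f c) c"
    have ab': "vb < va \<or> (va = vb \<and> m a b \<and> a \<noteq> b)" using ab unfolding R_def term_less_def va_def vb_def by simp
    have bc': "vc < vb \<or> (vb = vc \<and> m b c \<and> b \<noteq> c)" using bc unfolding R_def term_less_def vc_def vb_def by simp
    have "vc < va \<or> (va = vc \<and> m a c \<and> a \<noteq> c)"
    proof (cases "vb < va")
      case True
      then show ?thesis using bc' by auto
    next
      case False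
      then have e: "va = vb" "m a b" "a \<noteq> b" using ab' by auto
      show ?thesis
      proof (cases "vc < vb")
        case True then show ?thesis using e by auto
      next
        case False
        then have "vb = vc" "m b c" using bc' by auto
        moreover have "a \<noteq> c" using e \<open>m b c\<close> antis by blast
        ultimately show ?thesis using e trm by blast
      qed
    qed
    then show "R a c" unfolding R_def term_less_def va_def vc_def by simp
  qed
  have asym: "\<And>a b. R a b \<Longrightarrow> R b a \<Longrightarrow> False"
    unfolding R_def term_less_def using antis by auto
  obtain a where a: "a \<in> S" "\<forall>b\<in>S. b \<noteq> a \<longrightarrow> R b a"
    using finite_max[OF fin ne tot tr] by blast
  have P: "f a \<noteq> 0 \<and> (\<forall>b. f b \<noteq> 0 \<longrightarrow> b \<noteq> a \<longrightarrow> term_less val r m (f b, b) (f a, a))"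
    using a unfolding S_def R_def by auto
  have "f (THE a. f a \<noteq> 0 \<and> (\<forall>b. f b \<noteq> 0 \<longrightarrow> b \<noteq> a \<longrightarrow> term_less val r m (f b, b) (f a, a))) \<noteq> 0"
  proof (rule theI2[of _ a])
    show "f a \<noteq> 0 \<and> (\<forall>b. f b \<noteq> 0 \<longrightarrow> b \<noteq> a \<longrightarrow> term_less val r m (f b, b) (f a, a))" by (rule P)
    fix x assume "f x \<noteq> 0 \<and> (\<forall>b. f b \<noteq> 0 \<longrightarrow> b \<noteq> x \<longrightarrow> term_less val r m (f b, b) (f x, x))"
    then show "x = a" using P asym unfolding R_def by blast
  qed auto
  then show ?thesis unfolding lt_exp_def .
qed

lemma one_dir:
  fixes val :: "'k::field \<Rightarrow> int"
    and I G :: "('v::finite, 'k) series set"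
  assumes "poly_ideal I" and "monomial_order m1"
    and gb: "groebner_basis val r1 m1 I G"
    and eq: "LT_set val r1 m1 G = LT_set val r2 m2 G"
  shows "LT_ideal val r1 m1 I \<subseteq> LT_ideal val r2 m2 I"
proof -
  let ?S1 = "(\<lambda>f. monom (fst (LT val r1 m1 f)) (snd (LT val r1 m1 f))) ` (I - {0})"
  let ?S2 = "(\<lambda>f. monom (fst (LT val r2 m2 f)) (snd (LT val r2 m2 f))) ` (I - {0})"
  have GI: "G \<subseteq> I" using gb unfolding groebner_basis_def by auto
  have Ip: "I \<subseteq> polys" using assms(1) unfolding poly_ideal_def by auto
  have key: "?S1 \<subseteq> J" if J: "poly_ideal J" "?S2 \<subseteq> J" for J
  proof
    fix x assume "x \<in> ?S1"
    then obtain f where f: "f \<in> I" "f \<noteq> 0"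
      and x: "x = monom (fst (LT val r1 m1 f)) (snd (LT val r1 m1 f))" by auto
    have "f \<in> tate_ideal val r1 I" using f(1) by (rule in_tate_ideal)
    then obtain g where g: "g \<in> G" "g \<noteq> 0" "snd (LT val r1 m1 g) \<le> snd (LT val r1 m1 f)"
      using gb f unfolding groebner_basis_def by blast
    have "LT val r1 m1 g \<in> LT_set val r2 m2 G" using g eq unfolding LT_set_def by auto
    then obtain g' where g': "g' \<in> G" "g' \<noteq> 0" "LT val r1 m1 g = LT val r2 m2 g'"
      unfolding LT_set_def by auto
    have inJ: "monom (fst (LT val r1 m1 g)) (snd (LT val r1 m1 g)) \<in> J"
      using g' GI J(2) by auto
    define cg where "cg = fst (LT val r1 m1 g)"
    define ag where "ag = snd (LT val r1 m1 g)"
    define cf where "cf = fst (LT val r1 m1 f)"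
    define af where "af = snd (LT val r1 m1 f)"
    have cgnz: "cg \<noteq> 0" unfolding cg_def LT_def using lt_coeff_nz[OF assms(2), of g val r1] g GI Ip by auto
    have "af - ag + ag = af" using g(3) unfolding af_def ag_def
      by (auto simp: fun_eq_iff le_fun_def)
    then have "x = smult_series (monom (cf / cg) (af - ag)) (monom cg ag)"
      using x cgnz unfolding smult_monom cf_def af_def by simp
    then show "x \<in> J" using J(1) inJ monom_polys unfolding poly_ideal_def cg_def ag_def by blast
  qed
  show ?thesis unfolding LT_ideal_def poly_ideal_gen_def
    using key by blast
qed

theorem mainTheorem1:
  fixes val :: "'k::field \<Rightarrow> int"
    and I G :: "('v::finite, 'k) series set"
    and r1 r2 :: "'v \<Rightarrow> rat"
    and m1 m2 :: "('v \<Rightarrow> nat) \<Rightarrow> ('v \<Rightarrow> nat) \<Rightarrow> bool"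
  assumes "complete_dvf val"
    and "poly_ideal I"
    and "monomial_order m1" and "monomial_order m2"
    and "G \<subseteq> I"
    and "groebner_basis val r1 m1 I G" and "groebner_basis val r2 m2 I G"
    and "LT_set val r1 m1 G = LT_set val r2 m2 G"
  shows "LT_ideal val r1 m1 I = LT_ideal val r2 m2 I"
  using one_dir[OF assms(2,3,6,8)] one_dir[OF assms(2,4,7) assms(8)[symmetric]] by blast

end
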